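(* Let $G$ be a connected bipartite graph with $G\not\cong K_2$. Then $\chi'_{2}(\overleftrightarrow{G}) = \chi'_{1,2}(\overleftrightarrow{G})$.
   Context: For a simple graph $G$, the symmetric digraph $\overleftrightarrow{G}$ is obtained by replacing each edge $uv$ of $G$ by the pair of opposite arcs $\overrightarrow{uv}$ and $\overrightarrow{vu}$. A monochromatic 2-path is a pair of arcs $\overrightarrow{uv},\overrightarrow{vw}$ with $w\neq u$ of the same colour; a monochromatic 2-cycle is a pair $\overrightarrow{uv},\overrightarrow{vu}$ of the same colour. $\chi'_{1,2}(\overleftrightarrow{G})$ is the least number of colours in an arc-colouring of $\overleftrightarrow{G}$ with no monochromatic 2-cycles and no monochromatic 2-paths; $\chi'_{2}(\overleftrightarrow{G})$ is the least number of colours in an arc-colouring of $\overleftrightarrow{G}$ with no monochromatic 2-paths (monochromatic 2-cycles allowed). *)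

theory Defs
  imports Main
begin

definition simple_graph :: "'a set \<Rightarrow> ('a \<Rightarrow> 'a \<Rightarrow> bool) \<Rightarrow> bool" where
  "simple_graph V E \<longleftrightarrow> finite V \<and>
     (\<forall>u v. E u v \<longrightarrow> u \<in> V \<and> v \<in> V \<and> u \<noteq> v \<and> E v u)"

definition connected_graph :: "'a set \<Rightarrow> ('a \<Rightarrow> 'a \<Rightarrow> bool) \<Rightarrow> bool" where
  "connected_graph V E \<longleftrightarrow> V \<noteq> {} \<and>
     (\<forall>u\<in>V. \<forall>v\<in>V. (u, v) \<in> {(x, y). E x y}\<^sup>*)"

definition bipartite_graph :: "'a set \<Rightarrow> ('a \<Rightarrow> 'a \<Rightarrow> bool) \<Rightarrow> bool" where
  "bipartite_graph V E \<longleftrightarrow> (\<exists>A B. A \<union> B = V \<and> A \<inter> B = {} \<and>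
     (\<forall>u v. E u v \<longrightarrow> (u \<in> A \<and> v \<in> B) \<or> (u \<in> B \<and> v \<in> A)))"

definition is_K2 :: "'a set \<Rightarrow> ('a \<Rightarrow> 'a \<Rightarrow> bool) \<Rightarrow> bool" where
  "is_K2 V E \<longleftrightarrow> (\<exists>u v. u \<noteq> v \<and> V = {u, v} \<and> E u v)"

text \<open>Arcs of the symmetric digraph: each edge uv gives arcs (u,v) and (v,u).\<close>
definition sym_arcs :: "('a \<Rightarrow> 'a \<Rightarrow> bool) \<Rightarrow> ('a \<times> 'a) set" where
  "sym_arcs E = {(u, v). E u v}"

definition no_mono_2path :: "('a \<Rightarrow> 'a \<Rightarrow> bool) \<Rightarrow> ('a \<times> 'a \<Rightarrow> nat) \<Rightarrow> bool" where
  "no_mono_2path E c \<longleftrightarrow>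
     (\<forall>u v w. E u v \<and> E v w \<and> w \<noteq> u \<longrightarrow> c (u, v) \<noteq> c (v, w))"

definition no_mono_2cycle :: "('a \<Rightarrow> 'a \<Rightarrow> bool) \<Rightarrow> ('a \<times> 'a \<Rightarrow> nat) \<Rightarrow> bool" where
  "no_mono_2cycle E c \<longleftrightarrow> (\<forall>u v. E u v \<longrightarrow> c (u, v) \<noteq> c (v, u))"

definition arc_colouring :: "('a \<Rightarrow> 'a \<Rightarrow> bool) \<Rightarrow> nat \<Rightarrow> ('a \<times> 'a \<Rightarrow> nat) \<Rightarrow> bool" where
  "arc_colouring E k c \<longleftrightarrow> (\<forall>a\<in>sym_arcs E. c a < k)"

definition chi2 :: "('a \<Rightarrow> 'a \<Rightarrow> bool) \<Rightarrow> nat" where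
  "chi2 E = (LEAST k. \<exists>c. arc_colouring E k c \<and> no_mono_2path E c)"

definition chi12 :: "('a \<Rightarrow> 'a \<Rightarrow> bool) \<Rightarrow> nat" where
  "chi12 E = (LEAST k. \<exists>c. arc_colouring E k c \<and> no_mono_2path E c \<and> no_mono_2cycle E c)"

end

theory Submission
  imports Defs
begin

lemma twopath_exists:
  assumes s: "simple_graph V E" and c: "connected_graph V E"
    and k: "\<not> is_K2 V E" and e: "E u v"
  shows "\<exists>x y z. E x y \<and> E y z \<and> z \<noteq> x"
proof (rule ccontr)
  assume n: "\<not> (\<exists>x y z. E x y \<and> E y z \<and> z \<noteq> x)"
  have uv: "u \<in> V" "v \<in> V" "u \<noteq> v" "E v u" using s e unfolding simple_graph_def by auto
  have "V \<noteq> {u, v}" using k uv e unfolding is_K2_def by blast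
  then obtain w where w: "w \<in> V" "w \<notin> {u, v}" using uv by blast
  have r: "(u, w) \<in> {(x, y). E x y}\<^sup>*" using c uv w unfolding connected_graph_def by blast
  have "\<And>y. (u, y) \<in> {(x, y). E x y}\<^sup>* \<Longrightarrow> y \<in> {u, v}"
  proof -
    fix y assume "(u, y) \<in> {(x, y). E x y}\<^sup>*"
    then show "y \<in> {u, v}"
    proof (induction rule: rtrancl_induct)
      case base then show ?case by simp
    next
      case (step y z)
      then show ?case using n e uv by blast
    qed
  qed
  then show False using r w by blast
qed

theorem mainTheorem5:
  fixes V :: "'a set" and E :: "'a \<Rightarrow> 'a \<Rightarrow> bool"
  assumes "simple_graph V E"
    and "connected_graph V E"
    and "bipartite_graph V E"
    and "\<not> is_K2 V E"
  shows "chi2 E = chi12 E"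
proof (cases "\<exists>u v. E u v")
  case False
  have "chi12 E = 0" unfolding chi12_def
    by (rule Least_eq_0) (use False in \<open>auto simp: arc_colouring_def sym_arcs_def no_mono_2path_def no_mono_2cycle_def\<close>)
  moreover have "chi2 E = 0" unfolding chi2_def
    by (rule Least_eq_0) (use False in \<open>auto simp: arc_colouring_def sym_arcs_def no_mono_2path_def\<close>)
  ultimately show ?thesis by simp
next
  case True
  then obtain u v where "E u v" by blast
  then obtain x y z where p: "E x y" "E y z" "z \<noteq> x"
    using twopath_exists assms by metis
  obtain A B where AB: "A \<union> B = V" "A \<inter> B = {}"
    "\<forall>u v. E u v \<longrightarrow> (u \<in> A \<and> v \<in> B) \<or> (u \<in> B \<and> v \<in> A)"
    using assms(3) unfolding bipartite_graph_def by blast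
  define c :: "'a \<times> 'a \<Rightarrow> nat" where "c = (\<lambda>(a, b). if a \<in> A then 0 else 1)"
  have c1: "arc_colouring E 2 c" unfolding arc_colouring_def c_def by auto
  have c2: "no_mono_2path E c" unfolding no_mono_2path_def c_def using AB by auto
  have c3: "no_mono_2cycle E c" unfolding no_mono_2cycle_def c_def using AB by auto
  have low: "2 \<le> k" if "arc_colouring E k d" "no_mono_2path E d" for k d
  proof (rule ccontr)
    assume "\<not> 2 \<le> k"
    moreover have "d (x, y) < k" "d (y, z) < k" using that(1) p
      unfolding arc_colouring_def sym_arcs_def by auto
    moreover have "d (x, y) \<noteq> d (y, z)" using that(2) p unfolding no_mono_2path_def by blast
    ultimately show False by linarith
  qed
  have "chi2 E = 2" unfolding chi2_def
    by (rule Least_equality) (use c1 c2 low in auto)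
  moreover have "chi12 E = 2" unfolding chi12_def
    by (rule Least_equality) (use c1 c2 c3 low in auto)
  ultimately show ?thesis by simp
qed

end
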